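(* Let $\langle [n],\{v_a\}_{a\in[n]}\rangle$ be a cake-division instance, let $\alpha\ge1$, and let $\mathcal{I}$ be an $\alpha$-approximately envy-free allocation. Then for every $\rho\in(0,1]$ and every allocation $\mathcal{I}^*$, $$\mathrm{M}_\rho(\mathcal{I}^* )\ \le\ 2\alpha\,2^{1/\rho}\,n^{\frac{\rho}{\rho+1}}\ \mathrm{M}_\rho(\mathcal{I}).$$
   Context: The cake is $[0,1]$. Each agent's valuation $v_a$ assigns a value $v_a(I)\ge0$ to every interval $I\subseteq[0,1]$ and is normalized ($v_a([0,1])=1$), divisible (for every interval $[x,y]$ and $\lambda\in[0,1]$ there is $z\in[x,y]$ with $v_a([x,z])=\lambda v_a([x,y])$), and sigma additive ($v_a(I\cup J)=v_a(I)+v_a(J)$ for disjoint intervals). Intervals meeting only at an endpoint are regarded as disjoint. An allocation is a tuple $\mathcal{I}=\{I_1,\dots,I_n\}$ of pairwise-disjoint (possibly empty) intervals with $\bigcup_aI_a=[0,1]$, $I_a$ going to agent $a$. For $\alpha\ge1$, $\mathcal{I}$ is $\alpha$-approximately envy-free if $v_a(I_a)\ge\frac1\alpha v_a(I_b)$ for all $a,b$. The $\rho$-mean welfare is $\mathrm{M}_\rho(\mathcal{I})=\left(\frac1n\sum_{a=1}^n[v_a(I_a)]^\rho\right)^{1/\rho}$. *)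

theory Defs
  imports "HOL-Analysis.Analysis"
begin

definition cake_interval :: "real set \<Rightarrow> bool" where
  "cake_interval I \<longleftrightarrow> is_interval I \<and> I \<subseteq> {0..1}"

text \<open>Intervals meeting only at an endpoint are regarded as disjoint:
two intervals are disjoint iff they share at most one point.\<close>
definition idisjoint :: "real set \<Rightarrow> real set \<Rightarrow> bool" where
  "idisjoint I J \<longleftrightarrow> (\<exists>p. I \<inter> J \<subseteq> {p})"

definition valuation :: "(real set \<Rightarrow> real) \<Rightarrow> bool" where
  "valuation v \<longleftrightarrow>
     (\<forall>I. cake_interval I \<longrightarrow> v I \<ge> 0) \<and>
     v {0..1} = 1 \<and>
     (\<forall>x y lam. 0 \<le> x \<and> x \<le> y \<and> y \<le> 1 \<and> 0 \<le> lam \<and> lam \<le> 1 \<longrightarrow>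
        (\<exists>z\<in>{x..y}. v {x..z} = lam * v {x..y})) \<and>
     (\<forall>I J. cake_interval I \<and> cake_interval J \<and> cake_interval (I \<union> J) \<and> idisjoint I J
        \<longrightarrow> v (I \<union> J) = v I + v J)"

definition allocation :: "nat \<Rightarrow> (nat \<Rightarrow> real set) \<Rightarrow> bool" where
  "allocation n I \<longleftrightarrow>
     (\<forall>a<n. cake_interval (I a)) \<and>
     (\<forall>a<n. \<forall>b<n. a \<noteq> b \<longrightarrow> idisjoint (I a) (I b)) \<and>
     (\<Union>a<n. I a) = {0..1}"

definition approx_envy_free ::
    "nat \<Rightarrow> (nat \<Rightarrow> real set \<Rightarrow> real) \<Rightarrow> real \<Rightarrow> (nat \<Rightarrow> real set) \<Rightarrow> bool" where
  "approx_envy_free n v \<alpha> I \<longleftrightarrow> (\<forall>a<n. \<forall>b<n. v a (I a) \<ge> (1 / \<alpha>) * v a (I b))"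

definition rho_mean ::
    "nat \<Rightarrow> (nat \<Rightarrow> real set \<Rightarrow> real) \<Rightarrow> real \<Rightarrow> (nat \<Rightarrow> real set) \<Rightarrow> real" where
  "rho_mean n v \<rho> I = ((1 / real n) * (\<Sum>a<n. (v a (I a)) powr \<rho>)) powr (1 / \<rho>)"

end

theory Submission imports Defs begin

lemma exists_notin_finite:
  fixes a b :: real assumes "a < b" "finite E"
  shows "\<exists>t. a < t \<and> t < b \<and> t \<notin> E"
proof -
  have "infinite ({a<..<b} - E)" using assms infinite_Ioo Diff_infinite_finite by blast
  then obtain t where "t \<in> {a<..<b} - E" by (metis ex_in_conv finite.emptyI)
  then show ?thesis by auto
qed

lemma cover_lemma:
  fixes F :: "real \<Rightarrow> real" and L R :: "'b \<Rightarrow> real"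
  assumes mono: "mono F" and fin: "finite K" and finE: "finite E"
    and LR: "\<forall>b\<in>K. L b \<le> R b"
  shows "\<forall>p q. (\<forall>t. p < t \<and> t < q \<and> t \<notin> E \<longrightarrow> (\<exists>b\<in>K. L b \<le> t \<and> t \<le> R b))
     \<longrightarrow> F q - F p \<le> (\<Sum>b\<in>K. F (R b) - F (L b))"
  using fin LR
proof (induction K rule: finite_remove_induct)
  case empty
  show ?case
  proof (intro allI impI)
    fix p q assume h: "\<forall>t. p < t \<and> t < q \<and> t \<notin> E \<longrightarrow> (\<exists>b\<in>{}. L b \<le> t \<and> t \<le> R b)"
    have "\<not> p < q"
    proof
      assume "p < q" then obtain t where "p < t" "t < q" "t \<notin> E" using exists_notin_finite finE by blast
      then show False using h by auto
    qed
    then show "F q - F p \<le> (\<Sum>b\<in>{}. F (R b) - F (L b))" using mono by (simp add: mono_def)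
  qed
next
  case (remove A)
  have nonneg: "0 \<le> (\<Sum>b\<in>B. F (R b) - F (L b))" if "B \<subseteq> A" for B
  proof (rule sum_nonneg)
    fix b assume "b \<in> B"
    then have "L b \<le> R b" using that remove.prems by blast
    then show "0 \<le> F (R b) - F (L b)" using monoD[OF mono, of "L b" "R b"] by simp
  qed
  have "Max (R ` A) \<in> R ` A" using remove.hyps(1,2) by simp
  then obtain b0 where b0: "b0 \<in> A" "R b0 = Max (R ` A)" by (metis imageE)
  have Rmax: "\<And>b. b \<in> A \<Longrightarrow> R b \<le> R b0" using b0 remove.hyps(1) by simp
  have IH: "\<forall>p q. (\<forall>t. p < t \<and> t < q \<and> t \<notin> E \<longrightarrow> (\<exists>b\<in>A - {b0}. L b \<le> t \<and> t \<le> R b))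
     \<longrightarrow> F q - F p \<le> (\<Sum>b\<in>A - {b0}. F (R b) - F (L b))"
    using remove.IH[OF b0(1)] remove.prems by blast
  have split: "(\<Sum>b\<in>A. F (R b) - F (L b)) = (F (R b0) - F (L b0)) + (\<Sum>b\<in>A - {b0}. F (R b) - F (L b))"
    using b0(1) remove.hyps(1) by (simp add: sum.remove)
  show ?case
  proof (intro allI impI)
    fix p q assume h: "\<forall>t. p < t \<and> t < q \<and> t \<notin> E \<longrightarrow> (\<exists>b\<in>A. L b \<le> t \<and> t \<le> R b)"
    show "F q - F p \<le> (\<Sum>b\<in>A. F (R b) - F (L b))"
    proof (cases "p < q")
      case False
      then show ?thesis using nonneg[of A] monoD[OF mono, of q p] by simp
    next
      case True
      have Rq: "q \<le> R b0"
      proof (rule ccontr)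
        assume "\<not> q \<le> R b0"
        then obtain t where t: "max p (R b0) < t" "t < q" "t \<notin> E"
          using exists_notin_finite[OF _ finE, of "max p (R b0)" q] True by auto
        then obtain b where "b \<in> A" "t \<le> R b" using h by auto
        then show False using Rmax t by fastforce
      qed
      show ?thesis
      proof (cases "L b0 \<le> p")
        case True
        have "F q - F p \<le> F (R b0) - F (L b0)" using mono Rq True by (simp add: mono_def diff_mono)
        moreover have "0 \<le> (\<Sum>b\<in>A - {b0}. F (R b) - F (L b))" by (rule nonneg) auto
        ultimately show ?thesis using split by linarith
      next
        case False
        define c where "c = min q (L b0)"
        have "F c - F p \<le> (\<Sum>b\<in>A - {b0}. F (R b) - F (L b))"
        proof -
          have "\<forall>t. p < t \<and> t < c \<and> t \<notin> E \<longrightarrow> (\<exists>b\<in>A - {b0}. L b \<le> t \<and> t \<le> R b)"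
          proof (intro allI impI)
            fix t assume t: "p < t \<and> t < c \<and> t \<notin> E"
            then obtain b where "b \<in> A" "L b \<le> t" "t \<le> R b" using h c_def by auto
            moreover have "b \<noteq> b0" using t c_def \<open>L b \<le> t\<close> by auto
            ultimately show "\<exists>b\<in>A - {b0}. L b \<le> t \<and> t \<le> R b" by blast
          qed
          then show ?thesis using IH by blast
        qed
        moreover have "F q - F c \<le> F (R b0) - F (L b0)"
        proof (cases "q \<le> L b0")
          case True
          then have "c = q" using c_def by simp
          then show ?thesis using remove.prems b0(1) mono by (simp add: mono_def)
        next
          case False
          then have "c = L b0" using c_def by simp
          then show ?thesis using mono Rq by (simp add: mono_def)
        qed
        ultimately show ?thesis using split by linarith
      qed
    qed
  qed
qed


lemma val_nonneg: assumes "valuation v" "cake_interval J" shows "0 \<le> v J"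
proof -
  have "\<forall>I. cake_interval I \<longrightarrow> v I \<ge> 0" using assms(1) unfolding valuation_def by (elim conjE) assumption
  then show ?thesis using assms(2) by blast
qed

lemma val_add: assumes "valuation v" "cake_interval I" "cake_interval J" "cake_interval (I \<union> J)"
   "idisjoint I J" shows "v (I \<union> J) = v I + v J"
proof -
  have "\<forall>I J. cake_interval I \<and> cake_interval J \<and> cake_interval (I \<union> J) \<and> idisjoint I J
        \<longrightarrow> v (I \<union> J) = v I + v J" using assms(1) unfolding valuation_def by (elim conjE) assumption
  then show ?thesis using assms(2-5) by blast
qed

lemma val_empty: assumes "valuation v" shows "v {} = 0"
proof -
  have c: "cake_interval {}" by (simp add: cake_interval_def)
  have d: "idisjoint {} {}" by (simp add: idisjoint_def)
  have "v ({} \<union> {}) = v {} + v {}" by (rule val_add[OF assms c c _ d]) (simp add: c)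
  then show ?thesis by simp
qed

lemma val_point: assumes "valuation v" "0 \<le> p" "p \<le> 1" shows "v {p} = 0"
proof -
  have c: "cake_interval {p}" using assms(2,3) by (simp add: cake_interval_def is_interval_1)
  have d: "idisjoint {p} {p}" by (simp add: idisjoint_def)
  have "v ({p} \<union> {p}) = v {p} + v {p}" by (rule val_add[OF assms(1) c c _ d]) (simp add: c)
  then show ?thesis by simp
qed

lemma val_add_point: assumes "valuation v" "cake_interval J" "0 \<le> p" "p \<le> 1" "is_interval (J \<union> {p})"
  shows "v (J \<union> {p}) = v J"
proof -
  have c: "cake_interval {p}" using assms(3,4) by (simp add: cake_interval_def is_interval_1)
  have "J \<union> {p} \<subseteq> {0..1}" using assms(2,3,4) unfolding cake_interval_def by auto
  then have "cake_interval (J \<union> {p})" using assms(5) unfolding cake_interval_def by blast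
  moreover have "idisjoint J {p}" unfolding idisjoint_def by blast
  ultimately have "v (J \<union> {p}) = v J + v {p}" using val_add[OF assms(1) assms(2) c] by blast
  then show ?thesis using val_point[OF assms(1,3,4)] by simp
qed

lemma val_split: assumes "valuation v" "0 \<le> x" "x \<le> y" "y \<le> 1"
  shows "v {0..y} = v {0..x} + v {x..y}"
proof -
  have "{0..x} \<union> {x..y} = {0..y}" using assms by auto
  moreover have "idisjoint {0..x} {x..y}" unfolding idisjoint_def by (rule exI[of _ x]) auto
  moreover have "cake_interval {0..x}" "cake_interval {x..y}" "cake_interval {0..y}"
    using assms by (auto simp: cake_interval_def)
  ultimately show ?thesis using val_add[OF assms(1), of "{0..x}" "{x..y}"] by simp
qed

lemma interval_props:
  assumes "cake_interval J" "J \<noteq> {}"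
  shows "{Inf J<..<Sup J} \<subseteq> J" "J \<subseteq> {Inf J..Sup J}" "0 \<le> Inf J" "Sup J \<le> 1" "Inf J \<le> Sup J"
proof -
  have sub: "J \<subseteq> {0..1}" and iv: "is_interval J" using assms by (auto simp: cake_interval_def)
  have bb1: "bdd_below J" using sub unfolding bdd_below_def by (auto intro!: exI[of _ 0])
  have bb2: "bdd_above J" using sub unfolding bdd_above_def by (auto intro!: exI[of _ 1])
  note bb = bb1 bb2
  show "J \<subseteq> {Inf J..Sup J}" using bb by (auto intro: cInf_lower cSup_upper)
  show "{Inf J<..<Sup J} \<subseteq> J"
  proof
    fix t assume "t \<in> {Inf J<..<Sup J}"
    then have "Inf J < t" "t < Sup J" by auto
    then obtain a b where "a \<in> J" "a < t" "b \<in> J" "t < b"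
      using cInf_less_iff[OF assms(2) bb(1)] less_cSup_iff[OF assms(2) bb(2)] by blast
    then show "t \<in> J" using iv unfolding is_interval_1 by (meson less_le)
  qed
  obtain x where x: "x \<in> J" using assms by blast
  then have "x \<in> {0..1}" using sub by blast
  show "0 \<le> Inf J" using sub assms(2) by (intro cInf_greatest) auto
  show "Sup J \<le> 1" using sub assms(2) by (intro cSup_least) auto
  show "Inf J \<le> Sup J" using x bb cInf_lower cSup_upper by (meson order.trans)
qed

lemma val_closure:
  assumes v: "valuation v" and J: "cake_interval J" "J \<noteq> {}"
  shows "v J = v {Inf J..Sup J}"
proof -
  note P = interval_props[OF J]
  define l r where "l = Inf J" and "r = Sup J"
  have i1: "{l<..<r} \<subseteq> J" "J \<subseteq> {l..r}" "0 \<le> l" "r \<le> 1" "l \<le> r" using P l_def r_def by auto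
  have iv1: "is_interval (J \<union> {l})" unfolding is_interval_1
  proof (intro ballI allI impI)
    fix a b x assume ab: "a \<in> J \<union> {l}" "b \<in> J \<union> {l}" "a \<le> x \<and> x \<le> b"
    show "x \<in> J \<union> {l}"
    proof (cases "x = l \<or> x = b")
      case True then show ?thesis using ab by auto
    next
      case False
      have la: "l \<le> a" using ab(1) i1(2) by auto
      have br: "b \<le> r" using ab(2) i1(2,5) by auto
      have "l < x" using False la ab(3) by linarith
      moreover have "x < r" using False br ab(3) by linarith
      ultimately have "x \<in> {l<..<r}" by simp
      then show ?thesis using i1(1) by blast
    qed
  qed
  have J1: "cake_interval (J \<union> {l})" using iv1 i1 J by (auto simp: cake_interval_def)
  have iv2: "is_interval ((J \<union> {l}) \<union> {r})" unfolding is_interval_1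
  proof (intro ballI allI impI)
    fix a b x assume ab: "a \<in> (J \<union> {l}) \<union> {r}" "b \<in> (J \<union> {l}) \<union> {r}" "a \<le> x \<and> x \<le> b"
    show "x \<in> (J \<union> {l}) \<union> {r}"
    proof (cases "x = l \<or> x = r")
      case True then show ?thesis by auto
    next
      case False
      have la: "l \<le> a" using ab(1) i1(2,5) by auto
      have br: "b \<le> r" using ab(2) i1(2,5) by auto
      have "l < x" using False la ab(3) by linarith
      moreover have "x < r" using False br ab(3) by linarith
      ultimately have "x \<in> {l<..<r}" by simp
      then show ?thesis using i1(1) by blast
    qed
  qed
  have eq: "(J \<union> {l}) \<union> {r} = {l..r}"
  proof
    show "J \<union> {l} \<union> {r} \<subseteq> {l..r}" using i1 by auto
    show "{l..r} \<subseteq> J \<union> {l} \<union> {r}"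
    proof
      fix x assume x: "x \<in> {l..r}"
      show "x \<in> J \<union> {l} \<union> {r}"
      proof (cases "x = l \<or> x = r")
        case False
        then have "x \<in> {l<..<r}" using x by auto
        then show ?thesis using i1 by blast
      qed auto
    qed
  qed
  have "v ((J \<union> {l}) \<union> {r}) = v (J \<union> {l})" using val_add_point[OF v J1 _ _ iv2] i1 by linarith
  also have "\<dots> = v J" using val_add_point[OF v J(1) _ _ iv1] i1 by linarith
  finally show ?thesis using eq l_def r_def by simp
qed


definition Fv :: "(real set \<Rightarrow> real) \<Rightarrow> real \<Rightarrow> real" where
  "Fv v x = v {0..max 0 (min 1 x)}"

lemma Fv_Icc: assumes "valuation v" "0 \<le> x" "x \<le> y" "y \<le> 1"
  shows "v {x..y} = Fv v y - Fv v x"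
proof -
  have "max 0 (min 1 x) = x" "max 0 (min 1 y) = y" using assms by auto
  then show ?thesis using val_split[OF assms] unfolding Fv_def by simp
qed

lemma Fv_mono: assumes "valuation v" shows "mono (Fv v)"
proof (rule monoI)
  fix x y :: real assume "x \<le> y"
  define x' y' where "x' = max 0 (min 1 x)" and "y' = max 0 (min 1 y)"
  have h: "0 \<le> x'" "x' \<le> y'" "y' \<le> 1" using \<open>x \<le> y\<close> x'_def y'_def by auto
  have "v {x'..y'} \<ge> 0" using val_nonneg[OF assms] h by (simp add: cake_interval_def is_interval_cc)
  then show "Fv v x \<le> Fv v y" using val_split[OF assms h] unfolding Fv_def x'_def[symmetric] y'_def[symmetric]
    by simp
qed

lemma Fv_0: "valuation v \<Longrightarrow> Fv v 0 = 0"
  unfolding Fv_def using val_point[of v 0] by simp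

lemma Fv_le1: assumes "valuation v" shows "Fv v x \<le> 1"
proof -
  have "Fv v x \<le> Fv v (max 1 x)" using Fv_mono[OF assms] by (simp add: monoD)
  also have "\<dots> = v {0..1}" unfolding Fv_def by simp
  also have "\<dots> = 1" using assms unfolding valuation_def by (elim conjE) assumption
  finally show ?thesis .
qed

definition lo :: "real set \<Rightarrow> real" where "lo J = (if J = {} then 0 else Inf J)"
definition hi :: "real set \<Rightarrow> real" where "hi J = (if J = {} then 0 else Sup J)"

lemma lohi_props: assumes "cake_interval J"
  shows "0 \<le> lo J" "lo J \<le> hi J" "hi J \<le> 1" "J \<subseteq> {lo J..hi J}" "{lo J<..<hi J} \<subseteq> J"
proof -
  have "(0 \<le> lo J \<and> lo J \<le> hi J \<and> hi J \<le> 1) \<and> J \<subseteq> {lo J..hi J} \<and> {lo J<..<hi J} \<subseteq> J"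
  proof (cases "J = {}")
    case True
    then show ?thesis unfolding lo_def hi_def by simp
  next
    case False
    note P = interval_props[OF assms False]
    have "lo J = Inf J" "hi J = Sup J" using False unfolding lo_def hi_def by auto
    then show ?thesis using P by simp
  qed
  then show "0 \<le> lo J" "lo J \<le> hi J" "hi J \<le> 1" "J \<subseteq> {lo J..hi J}" "{lo J<..<hi J} \<subseteq> J"
    by blast+
qed

lemma val_lohi: assumes v: "valuation v" and J: "cake_interval J"
  shows "v J = Fv v (hi J) - Fv v (lo J)"
proof (cases "J = {}")
  case True then show ?thesis using val_empty[OF v] by (simp add: lo_def hi_def)
next
  case False
  have "v J = v {lo J..hi J}" using val_closure[OF v J False] False by (simp add: lo_def hi_def)
  also have "\<dots> = Fv v (hi J) - Fv v (lo J)" using lohi_props[OF J] by (intro Fv_Icc[OF v]) auto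
  finally show ?thesis .
qed

lemma not_idisjoint_iff: "\<not> idisjoint A B \<longleftrightarrow> (\<exists>x y. x \<in> A \<inter> B \<and> y \<in> A \<inter> B \<and> x \<noteq> y)"
  unfolding idisjoint_def by blast

lemma interval_fill:
  fixes S :: "real set"
  assumes "is_interval S" "bdd_below S" "q \<in> S" "Inf S < t" "t \<le> q"
  shows "t \<in> S"
proof -
  have "S \<noteq> {}" using assms by auto
  then obtain a where "a \<in> S" "a < t" using cInf_less_iff[OF _ assms(2)] assms(4) by blast
  then show ?thesis using assms(1,3,5) unfolding is_interval_1 by (meson less_le)
qed

lemma inf_choice:
  fixes A B :: "real set"
  assumes "is_interval A" "is_interval B" "bdd_below A" "bdd_below B" "A \<inter> B \<noteq> {}"
  shows "Inf (A \<inter> B) = Inf A \<or> Inf (A \<inter> B) = Inf B"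
proof (rule ccontr)
  assume nc: "\<not> ?thesis"
  define c where "c = Inf (A \<inter> B)"
  have bS: "bdd_below (A \<inter> B)" using assms(3) by (meson bdd_below_mono inf_le1)
  have "Inf A \<le> c" unfolding c_def using assms(5,3) by (intro cInf_superset_mono) auto
  moreover have "Inf B \<le> c" unfolding c_def using assms(5,4) by (intro cInf_superset_mono) auto
  ultimately have lt: "Inf A < c" "Inf B < c" using nc c_def by auto
  have "A \<noteq> {}" "B \<noteq> {}" using assms(5) by auto
  then obtain p p' where p: "p \<in> A" "p < c" "p' \<in> B" "p' < c"
    using cInf_less_iff[OF _ assms(3)] cInf_less_iff[OF _ assms(4)] lt by meson
  obtain q where q: "q \<in> A \<inter> B" using assms(5) by blast
  have cq: "c \<le> q" unfolding c_def using bS q by (rule cInf_lower[rotated])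
  define t where "t = max p p'"
  have "t \<in> A" using assms(1) p q cq unfolding is_interval_1 t_def
    by (metis IntD1 max.cobounded1 max_less_iff_conj less_le order.strict_trans1)
  moreover have "t \<in> B" using assms(2) p q cq unfolding is_interval_1 t_def
    by (metis IntD2 max.cobounded2 max_less_iff_conj less_le order.strict_trans1)
  ultimately have "c \<le> t" unfolding c_def using bS by (simp add: cInf_lower)
  moreover have "t < c" using p t_def by simp
  ultimately show False by simp
qed

lemma same_inf:
  fixes S1 S2 :: "real set"
  assumes i: "is_interval S1" "is_interval S2" and b: "bdd_below S1" "bdd_below S2"
    and t1: "\<exists>x y. x \<in> S1 \<and> y \<in> S1 \<and> x \<noteq> y"
    and t2: "\<exists>x y. x \<in> S2 \<and> y \<in> S2 \<and> x \<noteq> y"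
    and eq: "Inf S1 = Inf S2"
  shows "\<exists>x y. x \<in> S1 \<inter> S2 \<and> y \<in> S1 \<inter> S2 \<and> x \<noteq> y"
proof -
  have up: "\<exists>q\<in>S. Inf S < q" if h: "bdd_below S" "\<exists>x y. x \<in> S \<and> y \<in> S \<and> x \<noteq> y" for S :: "real set"
  proof -
    obtain x y where xy: "x \<in> S" "y \<in> S" "x \<noteq> y" using h(2) by blast
    have "Inf S \<le> x" "Inf S \<le> y" using xy h(1) by (auto intro: cInf_lower)
    then show ?thesis using xy by (metis less_le)
  qed
  obtain q1 where q1: "q1 \<in> S1" "Inf S1 < q1" using up b t1 by blast
  obtain q2 where q2: "q2 \<in> S2" "Inf S2 < q2" using up b t2 by blast
  define c d where "c = Inf S1" and "d = min q1 q2"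
  have cd: "c < d" using q1 q2 eq c_def d_def by simp
  define x y where "x = c + (d - c) / 3" and "y = c + 2 * (d - c) / 3"
  have "c < x" "x \<le> d" "c < y" "y \<le> d" "x \<noteq> y" using cd unfolding x_def y_def by (auto simp: field_simps)
  then have "x \<in> S1 \<inter> S2" "y \<in> S1 \<inter> S2"
    using interval_fill[OF i(1) b(1) q1(1)] interval_fill[OF i(2) b(2) q2(1)] c_def d_def eq by auto
  then show ?thesis using \<open>x \<noteq> y\<close> by blast
qed


lemma ci_bdd: "cake_interval J \<Longrightarrow> bdd_below J"
  unfolding cake_interval_def bdd_below_def by (auto intro!: exI[of _ 0])

lemma ci_int: "cake_interval A \<Longrightarrow> cake_interval B \<Longrightarrow> is_interval (A \<inter> B)"
  unfolding cake_interval_def by (simp add: is_interval_Int)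

lemma ci_int_bdd: "cake_interval A \<Longrightarrow> bdd_below (A \<inter> B)"
  using ci_bdd by (meson bdd_below_mono inf_le1)

lemma uniq_overlap:
  assumes cA: "cake_interval A" and cB: "cake_interval B" and cC: "cake_interval C"
    and oA: "\<not> idisjoint A C" and oB: "\<not> idisjoint B C"
    and eq: "Inf (A \<inter> C) = Inf (B \<inter> C)"
  shows "\<not> idisjoint A B"
proof -
  have "\<exists>x y. x \<in> (A \<inter> C) \<inter> (B \<inter> C) \<and> y \<in> (A \<inter> C) \<inter> (B \<inter> C) \<and> x \<noteq> y"
    by (rule same_inf[OF ci_int[OF cA cC] ci_int[OF cB cC] ci_int_bdd[OF cA] ci_int_bdd[OF cB] _ _ eq])
      (use oA oB in \<open>auto simp: not_idisjoint_iff\<close>)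
  then show ?thesis unfolding not_idisjoint_iff by blast
qed

lemma count_overlaps:
  assumes aI: "allocation n I" and aS: "allocation n Istar"
  shows "card (SIGMA a:{..<n}. {b. b < n \<and> \<not> idisjoint (I b) (Istar a)}) \<le> 2 * n"
proof -
  define E where "E = (SIGMA a:{..<n}. {b. b < n \<and> \<not> idisjoint (I b) (Istar a)})"
  have cI: "\<And>b. b < n \<Longrightarrow> cake_interval (I b)" and dI: "\<And>b b'. b < n \<Longrightarrow> b' < n \<Longrightarrow> b \<noteq> b' \<Longrightarrow> idisjoint (I b) (I b')"
    using aI unfolding allocation_def by auto
  have cS: "\<And>b. b < n \<Longrightarrow> cake_interval (Istar b)" and dS: "\<And>b b'. b < n \<Longrightarrow> b' < n \<Longrightarrow> b \<noteq> b' \<Longrightarrow> idisjoint (Istar b) (Istar b')"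
    using aS unfolding allocation_def by auto
  define E1 where "E1 = {p\<in>E. Inf (I (snd p) \<inter> Istar (fst p)) = Inf (Istar (fst p))}"
  define E2 where "E2 = {p\<in>E. Inf (I (snd p) \<inter> Istar (fst p)) = Inf (I (snd p))}"
  have finE: "finite E" unfolding E_def by auto
  have "E \<subseteq> E1 \<union> E2"
  proof
    fix p assume p: "p \<in> E"
    obtain a b where ab: "p = (a, b)" by (cases p)
    have h: "a < n" "b < n" "\<not> idisjoint (I b) (Istar a)" using p ab E_def by auto
    have "I b \<inter> Istar a \<noteq> {}" using h(3) unfolding idisjoint_def by auto
    then have "Inf (I b \<inter> Istar a) = Inf (I b) \<or> Inf (I b \<inter> Istar a) = Inf (Istar a)"
      using inf_choice[of "I b" "Istar a"] cI[OF h(2)] cS[OF h(1)] ci_bdd[OF cI[OF h(2)]] ci_bdd[OF cS[OF h(1)]]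
      unfolding cake_interval_def by blast
    then show "p \<in> E1 \<union> E2" using p ab E1_def E2_def by auto
  qed
  then have "card E \<le> card (E1 \<union> E2)" using finE E1_def E2_def by (intro card_mono) auto
  also have "\<dots> \<le> card E1 + card E2" by (rule card_Un_le)
  also have "card E1 \<le> n"
  proof -
    have "inj_on fst E1"
    proof (rule inj_onI)
      fix p p' assume p: "p \<in> E1" and p': "p' \<in> E1" and f: "fst p = fst p'"
      obtain a b where ab: "p = (a, b)" by (cases p)
      obtain b' where ab': "p' = (a, b')" using f ab by (cases p') auto
      have h: "a < n" "b < n" "b' < n" "\<not> idisjoint (I b) (Istar a)" "\<not> idisjoint (I b') (Istar a)"
        "Inf (I b \<inter> Istar a) = Inf (Istar a)" "Inf (I b' \<inter> Istar a) = Inf (Istar a)"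
        using p p' ab ab' E1_def E_def by auto
      have "\<not> idisjoint (I b) (I b')"
        using uniq_overlap[OF cI[OF h(2)] cI[OF h(3)] cS[OF h(1)] h(4,5)] h(6,7) by simp
      then have "b = b'" using dI h(2,3) by blast
      then show "p = p'" using ab ab' by simp
    qed
    moreover have "fst ` E1 \<subseteq> {..<n}" using E1_def E_def by auto
    ultimately show ?thesis using card_inj_on_le[of fst E1 "{..<n}"] by simp
  qed
  also have "card E2 \<le> n"
  proof -
    have "inj_on snd E2"
    proof (rule inj_onI)
      fix p p' assume p: "p \<in> E2" and p': "p' \<in> E2" and f: "snd p = snd p'"
      obtain a b where ab: "p = (a, b)" by (cases p)
      obtain a' where ab': "p' = (a', b)" using f ab by (cases p') auto
      have h: "a < n" "a' < n" "b < n" "\<not> idisjoint (Istar a) (I b)" "\<not> idisjoint (Istar a') (I b)"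
        "Inf (Istar a \<inter> I b) = Inf (I b)" "Inf (Istar a' \<inter> I b) = Inf (I b)"
        using p p' ab ab' E2_def E_def by (auto simp: Int_commute idisjoint_def)
      have "\<not> idisjoint (Istar a) (Istar a')"
        using uniq_overlap[OF cS[OF h(1)] cS[OF h(2)] cI[OF h(3)] h(4,5)] h(6,7) by simp
      then have "a = a'" using dS h(1,2) by blast
      then show "p = p'" using ab ab' by simp
    qed
    moreover have "snd ` E2 \<subseteq> {..<n}" using E2_def E_def by auto
    ultimately show ?thesis using card_inj_on_le[of snd E2 "{..<n}"] by simp
  qed
  finally show ?thesis unfolding E_def by simp
qed


lemma agent_bounds:
  assumes v: "valuation va" and aI: "allocation n I" and aS: "allocation n Istar"
    and ef: "\<forall>b<n. va (I a) \<ge> (1 / \<alpha>) * va (I b)" and al: "\<alpha> \<ge> 1" and a: "a < n"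
  shows "va (I a) \<ge> 1 / (\<alpha> * real n)"
    "va (Istar a) \<le> \<alpha> * real (card {b. b < n \<and> \<not> idisjoint (I b) (Istar a)}) * va (I a)"
    "0 \<le> va (Istar a)" "va (Istar a) \<le> 1"
proof -
  have cI: "\<And>b. b < n \<Longrightarrow> cake_interval (I b)" using aI unfolding allocation_def by auto
  have cS: "cake_interval (Istar a)" using aS a unfolding allocation_def by auto
  have cov: "\<And>t. 0 \<le> t \<Longrightarrow> t \<le> 1 \<Longrightarrow> \<exists>b<n. t \<in> I b"
  proof -
    fix t :: real assume "0 \<le> t" "t \<le> 1"
    then have "t \<in> (\<Union>a<n. I a)" using aI unfolding allocation_def by simp
    then show "\<exists>b<n. t \<in> I b" by blast
  qed
  have le: "va (I b) \<le> \<alpha> * va (I a)" if "b < n" for b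
  proof -
    have "(1 / \<alpha>) * va (I b) \<le> va (I a)" using ef that by blast
    then show ?thesis using al by (simp add: field_simps)
  qed
  have mF: "mono (Fv va)" by (rule Fv_mono[OF v])
  have vI: "\<And>b. b < n \<Longrightarrow> va (I b) = Fv va (hi (I b)) - Fv va (lo (I b))"
    using val_lohi[OF v cI] by blast
  have LR: "\<forall>b\<in>K. lo (I b) \<le> hi (I b)" if "K \<subseteq> {..<n}" for K
    using lohi_props(2)[OF cI] that by auto
  have "Fv va 1 - Fv va 0 \<le> (\<Sum>b\<in>{..<n}. Fv va (hi (I b)) - Fv va (lo (I b)))"
  proof -
    have "\<forall>t. 0 < t \<and> t < 1 \<and> t \<notin> {} \<longrightarrow> (\<exists>b\<in>{..<n}. lo (I b) \<le> t \<and> t \<le> hi (I b))"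
    proof (intro allI impI)
      fix t :: real assume "0 < t \<and> t < 1 \<and> t \<notin> {}"
      then have "0 \<le> t" "t \<le> 1" by auto
      then obtain b where "b < n" "t \<in> I b" using cov by blast
      then show "\<exists>b\<in>{..<n}. lo (I b) \<le> t \<and> t \<le> hi (I b)" using lohi_props(4)[OF cI[of b]] by (intro bexI[of _ b]) auto
    qed
    then show ?thesis using cover_lemma[OF mF, of "{..<n}" "{}" "\<lambda>b. lo (I b)" "\<lambda>b. hi (I b)"] LR[of "{..<n}"]
      by blast
  qed
  also have "\<dots> = (\<Sum>b\<in>{..<n}. va (I b))" using vI by simp
  also have "\<dots> \<le> (\<Sum>b\<in>{..<n}. \<alpha> * va (I a))" using le by (intro sum_mono) auto
  finally have f1: "Fv va 1 - Fv va 0 \<le> real n * (\<alpha> * va (I a))" by simp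
  have "va {0..1} = 1" using v unfolding valuation_def by (elim conjE) assumption
  then have "Fv va 1 = 1" unfolding Fv_def by simp
  then have "1 \<le> real n * (\<alpha> * va (I a))" using f1 Fv_0[OF v] by simp
  moreover have "real n > 0" using a by simp
  ultimately show "va (I a) \<ge> 1 / (\<alpha> * real n)" using al by (simp add: field_simps)
  define K where "K = {b. b < n \<and> \<not> idisjoint (I b) (Istar a)}"
  define E where "E = (\<Union>b\<in>{..<n} - K. I b \<inter> Istar a)"
  have finE: "finite E" unfolding E_def
  proof (intro finite_UN_I)
    fix b assume "b \<in> {..<n} - K"
    then have "idisjoint (I b) (Istar a)" using K_def by auto
    then obtain p where "I b \<inter> Istar a \<subseteq> {p}" unfolding idisjoint_def by blast
    then show "finite (I b \<inter> Istar a)" using finite_subset by blast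
  qed auto
  have "Fv va (hi (Istar a)) - Fv va (lo (Istar a)) \<le> (\<Sum>b\<in>K. Fv va (hi (I b)) - Fv va (lo (I b)))"
  proof -
    have "\<forall>t. lo (Istar a) < t \<and> t < hi (Istar a) \<and> t \<notin> E \<longrightarrow> (\<exists>b\<in>K. lo (I b) \<le> t \<and> t \<le> hi (I b))"
    proof (intro allI impI)
      fix t :: real assume t: "lo (Istar a) < t \<and> t < hi (Istar a) \<and> t \<notin> E"
      then have tS: "t \<in> Istar a" using lohi_props(5)[OF cS] by auto
      then have "0 \<le> t" "t \<le> 1" using cS unfolding cake_interval_def by auto
      then obtain b where b: "b < n" "t \<in> I b" using cov by blast
      have "b \<in> K" using b tS t E_def by blast
      then show "\<exists>b\<in>K. lo (I b) \<le> t \<and> t \<le> hi (I b)" using lohi_props(4)[OF cI[of b]] b by (intro bexI[of _ b]) auto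
    qed
    moreover have "K \<subseteq> {..<n}" using K_def by auto
    moreover have "finite K" using \<open>K \<subseteq> {..<n}\<close> finite_subset by blast
    ultimately show ?thesis using cover_lemma[OF mF \<open>finite K\<close> finE, of "\<lambda>b. lo (I b)" "\<lambda>b. hi (I b)"] LR[of K]
      by blast
  qed
  also have "\<dots> = (\<Sum>b\<in>K. va (I b))" using vI K_def by simp
  also have "\<dots> \<le> (\<Sum>b\<in>K. \<alpha> * va (I a))" using le K_def by (intro sum_mono) auto
  also have "\<dots> = \<alpha> * real (card K) * va (I a)" by simp
  finally show "va (Istar a) \<le> \<alpha> * real (card {b. b < n \<and> \<not> idisjoint (I b) (Istar a)}) * va (I a)"
    using val_lohi[OF v cS] K_def by simp
  show "0 \<le> va (Istar a)" using val_nonneg[OF v cS] .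
  have "Fv va 0 \<le> Fv va (lo (Istar a))" using mF lohi_props(1)[OF cS] by (simp add: monoD)
  then show "va (Istar a) \<le> 1" using val_lohi[OF v cS] Fv_0[OF v] Fv_le1[OF v, of "hi (Istar a)"] by simp
qed



lemma final_ineq:
  fixes x y :: "nat \<Rightarrow> real" and k :: "nat \<Rightarrow> nat" and n :: nat
  assumes n: "n \<ge> 1" and al: "\<alpha> \<ge> 1" and r0: "0 < \<rho>" and r1: "\<rho> \<le> 1"
    and hx: "\<forall>a<n. x a \<ge> 1 / (\<alpha> * real n)"
    and hy: "\<forall>a<n. 0 \<le> y a \<and> y a \<le> 1"
    and hyx: "\<forall>a<n. y a \<le> \<alpha> * real (k a) * x a"
    and hk: "(\<Sum>a<n. k a) \<le> 2 * n"
  shows "(\<Sum>a<n. y a powr \<rho>) \<le> 2 * (2*\<alpha>) powr \<rho> * (real n powr (\<rho>/(\<rho>+1))) powr \<rho> * (\<Sum>a<n. x a powr \<rho>)"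
proof -
  define m where "m = real n powr (\<rho>/(\<rho>+1))"
  define T where "T = 2 * m"
  define B where "B = {a\<in>{..<n}. real (k a) > T}"
  define X where "X = (\<Sum>a<n. x a powr \<rho>)"
  define Am where "Am = \<alpha> powr \<rho> * m powr \<rho>"
  have npos: "real n > 0" using n by simp
  have m1: "m \<ge> 1" unfolding m_def using n r0 by (simp add: ge_one_powr_ge_zero)
  have xpos: "\<And>a. a < n \<Longrightarrow> x a > 0"
  proof -
    fix a assume "a < n"
    then have "x a \<ge> 1 / (\<alpha> * real n)" using hx by blast
    moreover have "1 / (\<alpha> * real n) > 0" using al npos by simp
    ultimately show "x a > 0" by linarith
  qed
  have X0: "X \<ge> 0" unfolding X_def by (intro sum_nonneg) simp
  have Am0: "Am \<ge> 0" unfolding Am_def by simp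
  have pw: "y a powr \<rho> \<le> (if real (k a) > T then 1 else 0) + (\<alpha> * T) powr \<rho> * x a powr \<rho>" if a: "a < n" for a
  proof (cases "real (k a) > T")
    case True
    have "y a powr \<rho> \<le> 1" using hy a r0 by (intro powr_le1) auto
    moreover have "0 \<le> (\<alpha> * T) powr \<rho> * x a powr \<rho>" by simp
    moreover have "(if real (k a) > T then 1 else 0) = (1::real)" using True by simp
    ultimately show ?thesis by linarith
  next
    case False
    have "y a \<le> \<alpha> * real (k a) * x a" using hyx a by blast
    also have "\<dots> \<le> \<alpha> * T * x a" using False al xpos[OF a] by (intro mult_right_mono mult_left_mono) auto
    finally have "y a powr \<rho> \<le> (\<alpha> * T * x a) powr \<rho>" using hy a r0 by (intro powr_mono2) auto
    also have "\<dots> = (\<alpha> * T) powr \<rho> * x a powr \<rho>" using al m1 T_def xpos[OF a] by (simp add: powr_mult)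
    finally show ?thesis using False by simp
  qed
  have "(\<Sum>a<n. y a powr \<rho>) \<le> (\<Sum>a<n. (if real (k a) > T then 1 else 0) + (\<alpha> * T) powr \<rho> * x a powr \<rho>)"
    using pw by (intro sum_mono) auto
  also have "\<dots> = real (card B) + (\<alpha> * T) powr \<rho> * X"
    unfolding X_def B_def by (simp add: sum.distrib sum_distrib_left sum.If_cases Int_def)
  finally have h3: "(\<Sum>a<n. y a powr \<rho>) \<le> real (card B) + (\<alpha> * T) powr \<rho> * X" .
  have aT: "(\<alpha> * T) powr \<rho> = 2 powr \<rho> * Am"
    unfolding Am_def T_def using al m1 by (simp add: powr_mult)
  have "real (card B) * T \<le> (\<Sum>a\<in>B. real (k a))"
  proof -
    have "real (card B) * T = (\<Sum>a\<in>B. T)" by simp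
    also have "\<dots> \<le> (\<Sum>a\<in>B. real (k a))" unfolding B_def by (intro sum_mono) auto
    finally show ?thesis .
  qed
  also have "\<dots> \<le> (\<Sum>a<n. real (k a))" unfolding B_def by (intro sum_mono2) auto
  also have "\<dots> \<le> 2 * real n" using hk by (metis of_nat_le_iff of_nat_mult of_nat_numeral of_nat_sum)
  finally have "real (card B) * (2 * m) \<le> 2 * real n" unfolding T_def .
  then have h1: "real (card B) \<le> real n / m" using m1 by (simp add: field_simps)
  have "X \<ge> (\<Sum>a<n. (1 / (\<alpha> * real n)) powr \<rho>)"
    unfolding X_def using hx al npos r0 by (intro sum_mono powr_mono2) auto
  then have Xl: "X \<ge> real n * (1 / (\<alpha> * real n)) powr \<rho>" by simp
  have key: "m * m powr \<rho> = real n powr \<rho>"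
  proof -
    have "m * m powr \<rho> = m powr (1 + \<rho>)" using m1 by (simp add: powr_add)
    also have "\<dots> = real n powr (\<rho>/(\<rho>+1) * (1 + \<rho>))" unfolding m_def by (simp add: powr_powr)
    also have "\<rho>/(\<rho>+1) * (1 + \<rho>) = \<rho>" using r0 by (simp add: field_simps)
    finally show ?thesis .
  qed
  have "Am * (real n * (1 / (\<alpha> * real n)) powr \<rho>) = m powr \<rho> * real n / real n powr \<rho>"
    unfolding Am_def using al npos by (simp add: powr_divide powr_mult field_simps)
  also have "\<dots> = real n / m" using key m1 npos by (simp add: field_simps)
  finally have "real n / m = Am * (real n * (1 / (\<alpha> * real n)) powr \<rho>)" by simp
  also have "\<dots> \<le> Am * X" using Xl Am0 by (intro mult_left_mono) auto
  finally have h2: "real n / m \<le> Am * X" .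
  have h4: "Am * X \<le> 2 powr \<rho> * (Am * X)" using Am0 X0 r0
    by (metis ge_one_powr_ge_zero less_imp_le mult_1 mult_nonneg_nonneg mult_right_mono one_le_numeral)
  have goal: "2 * (2*\<alpha>) powr \<rho> * (real n powr (\<rho>/(\<rho>+1))) powr \<rho> * X = 2 * (2 powr \<rho> * (Am * X))"
    unfolding Am_def m_def[symmetric] using al by (simp add: powr_mult)
  show ?thesis unfolding X_def[symmetric] goal using h1 h2 h3 h4 aT by simp
qed



theorem theorem9:
  fixes n :: nat and v :: "nat \<Rightarrow> real set \<Rightarrow> real" and \<alpha> \<rho> :: real
    and I Istar :: "nat \<Rightarrow> real set"
  assumes "n \<ge> 1"
    and "\<forall>a<n. valuation (v a)"
    and "\<alpha> \<ge> 1"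
    and "allocation n I"
    and "approx_envy_free n v \<alpha> I"
    and "0 < \<rho>" and "\<rho> \<le> 1"
    and "allocation n Istar"
  shows "rho_mean n v \<rho> Istar
           \<le> 2 * \<alpha> * 2 powr (1 / \<rho>) * real n powr (\<rho> / (\<rho> + 1)) * rho_mean n v \<rho> I"
proof -
  note n = assms(1) and val = assms(2) and al = assms(3) and aI = assms(4) and ef = assms(5)
    and r0 = assms(6) and r1 = assms(7) and aS = assms(8)
  define x where "x a = v a (I a)" for a
  define y where "y a = v a (Istar a)" for a
  define k where "k a = card {b. b < n \<and> \<not> idisjoint (I b) (Istar a)}" for a
  have efa: "\<And>a. a < n \<Longrightarrow> \<forall>b<n. v a (I a) \<ge> (1 / \<alpha>) * v a (I b)"
    using ef unfolding approx_envy_free_def by blast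
  have AB: "x a \<ge> 1 / (\<alpha> * real n) \<and> y a \<le> \<alpha> * real (k a) * x a \<and> 0 \<le> y a \<and> y a \<le> 1"
    if a: "a < n" for a
  proof -
    have va: "valuation (v a)" using val a by blast
    note B = agent_bounds[OF va aI aS efa[OF a] al a]
    show ?thesis unfolding x_def y_def k_def using B by blast
  qed
  have hx: "\<forall>a<n. x a \<ge> 1 / (\<alpha> * real n)" using AB by blast
  have hy: "\<forall>a<n. 0 \<le> y a \<and> y a \<le> 1" using AB by blast
  have hyx: "\<forall>a<n. y a \<le> \<alpha> * real (k a) * x a" using AB by blast
  have hk: "(\<Sum>a<n. k a) \<le> 2 * n"
    using count_overlaps[OF aI aS] unfolding k_def by simp
  define m where "m = real n powr (\<rho>/(\<rho>+1))"
  define C where "C = 2 * (2*\<alpha>) powr \<rho> * m powr \<rho>"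
  define X where "X = (\<Sum>a<n. x a powr \<rho>)"
  define Y where "Y = (\<Sum>a<n. y a powr \<rho>)"
  have YC: "Y \<le> C * X" using final_ineq[OF n al r0 r1 hx hy hyx hk] unfolding Y_def C_def X_def m_def by simp
  have npos: "real n > 0" using n by simp
  have m0: "m \<ge> 0" unfolding m_def by simp
  have Y0: "Y \<ge> 0" unfolding Y_def by (intro sum_nonneg) simp
  have X0: "X \<ge> 0" unfolding X_def by (intro sum_nonneg) simp
  have C0: "C \<ge> 0" unfolding C_def by simp
  have "rho_mean n v \<rho> Istar = ((1 / real n) * Y) powr (1 / \<rho>)"
    unfolding rho_mean_def Y_def y_def by simp
  also have "\<dots> \<le> (C * ((1 / real n) * X)) powr (1 / \<rho>)"
    using YC npos Y0 r0 by (intro powr_mono2) (auto simp: field_simps)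
  also have "\<dots> = C powr (1 / \<rho>) * ((1 / real n) * X) powr (1 / \<rho>)"
    by (rule powr_mult)
  also have "C powr (1 / \<rho>) = 2 * \<alpha> * 2 powr (1 / \<rho>) * m"
  proof -
    have "C powr (1 / \<rho>) = 2 powr (1/\<rho>) * ((2*\<alpha>) powr \<rho>) powr (1/\<rho>) * (m powr \<rho>) powr (1/\<rho>)"
      unfolding C_def using al m0 by (simp add: powr_mult)
    also have "((2*\<alpha>) powr \<rho>) powr (1/\<rho>) = 2 * \<alpha>" using r0 al by (simp add: powr_powr)
    also have "(m powr \<rho>) powr (1/\<rho>) = m" using r0 m0 by (simp add: powr_powr)
    finally show ?thesis by simp
  qed
  also have "((1 / real n) * X) powr (1 / \<rho>) = rho_mean n v \<rho> I"
    unfolding rho_mean_def X_def x_def by simp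
  finally show ?thesis unfolding m_def .
qed

end
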